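(* Let $\omega\in\mathcal{F}^1(\mathbb{P}^n,e)$ be such that $J=\sqrt{J}$. Then $\mathcal{K}=\mathcal{K}_{set}$; more precisely $K$ equals the (radical) ideal of the Kupka set $\mathcal{K}_{set}$.
   Context: $S=\mathbb{C}[x_0,\ldots,x_n]$, $R=\sum x_i\partial/\partial x_i$. $\mathcal{F}^1(\mathbb{P}^n,e)$ ($e\ge2$) is the set of (classes up to scalar of) $\omega=\sum A_i dx_i$, $A_i\in S$ homogeneous of degree $e-1$, not all zero, with $i_R\omega=0$, $\omega\wedge d\omega=0$ and zero locus $\mathrm{sing}(\omega)\subseteq\mathbb{P}^n$ of codimension $\ge2$. $\mathscr{C}(\eta)$ is the ideal generated by the coefficients of a form $\eta$; $J=\mathscr{C}(\omega)$; $K=(J:\mathscr{C}(d\omega))$ and $\mathcal{K}=\mathrm{Proj}(S/K)$. $\mathcal{K}_{set}$ is the closure in $\mathbb{P}^n$ of the set of points $p\in\mathrm{sing}(\omega)$ with $d\omega(p)\ne0$. *)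

theory Defs
  imports Complex_Main "HOL-Library.Poly_Mapping"
begin

text \<open>Polynomials in the variables x_i, i ranging over a finite type 'n with CARD('n) = n+1,
  with complex coefficients: S = C[x_0,...,x_n].  Monomials are poly_mappings from variables to exponents.\<close>

type_synonym 'n mpoly = "('n \<Rightarrow>\<^sub>0 nat) \<Rightarrow>\<^sub>0 complex"

definition mvar :: "'n \<Rightarrow> 'n mpoly" where
  "mvar i = Poly_Mapping.single (Poly_Mapping.single i 1) 1"

definition mdeg :: "('n::finite \<Rightarrow>\<^sub>0 nat) \<Rightarrow> nat" where
  "mdeg m = (\<Sum>i\<in>UNIV. Poly_Mapping.lookup m i)"

definition homogeneous :: "nat \<Rightarrow> 'n::finite mpoly \<Rightarrow> bool" where
  "homogeneous d p \<longleftrightarrow> (\<forall>m\<in>Poly_Mapping.keys p. mdeg m = d)"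

definition meval :: "'n::finite mpoly \<Rightarrow> ('n \<Rightarrow> complex) \<Rightarrow> complex" where
  "meval p x = (\<Sum>m\<in>Poly_Mapping.keys p. Poly_Mapping.lookup p m * (\<Prod>i\<in>UNIV. x i ^ Poly_Mapping.lookup m i))"

definition mpderiv :: "'n \<Rightarrow> 'n mpoly \<Rightarrow> 'n mpoly" where
  "mpderiv i p = (\<Sum>m\<in>Poly_Mapping.keys p.
      Poly_Mapping.single (m - Poly_Mapping.single i 1) (Poly_Mapping.lookup p m * of_nat (Poly_Mapping.lookup m i)))"

definition is_ideal :: "'n mpoly set \<Rightarrow> bool" where
  "is_ideal I \<longleftrightarrow> 0 \<in> I \<and> (\<forall>f\<in>I. \<forall>g\<in>I. f + g \<in> I) \<and> (\<forall>f\<in>I. \<forall>h. h * f \<in> I)"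

definition gen_ideal :: "'n mpoly set \<Rightarrow> 'n mpoly set" where
  "gen_ideal G = \<Inter>{I. is_ideal I \<and> G \<subseteq> I}"

definition radical :: "'n mpoly set \<Rightarrow> 'n mpoly set" where
  "radical I = {f. \<exists>k. f ^ Suc k \<in> I}"

definition ideal_quot :: "'n mpoly set \<Rightarrow> 'n mpoly set \<Rightarrow> 'n mpoly set" where
  "ideal_quot I L = {f. \<forall>g\<in>L. f * g \<in> I}"

text \<open>A 1-form omega = sum A_i dx_i is given by its coefficient function A.
  Coefficients of d omega: B j k = d_j A_k - d_k A_j (coefficient of dx_j /\ dx_k).\<close>
definition dform :: "('n \<Rightarrow> 'n mpoly) \<Rightarrow> 'n \<Rightarrow> 'n \<Rightarrow> 'n mpoly" where
  "dform A j k = mpderiv j (A k) - mpderiv k (A j)"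

text \<open>Coefficients of omega /\ d omega on dx_i /\ dx_j /\ dx_k.\<close>
definition wedge_dform :: "('n \<Rightarrow> 'n mpoly) \<Rightarrow> 'n \<Rightarrow> 'n \<Rightarrow> 'n \<Rightarrow> 'n mpoly" where
  "wedge_dform A i j k = A i * dform A j k + A j * dform A k i + A k * dform A i j"

definition zero_set :: "'n::finite mpoly set \<Rightarrow> ('n \<Rightarrow> complex) set" where
  "zero_set F = {x. \<forall>f\<in>F. meval f x = 0}"

definition zariski_closed :: "('n::finite \<Rightarrow> complex) set \<Rightarrow> bool" where
  "zariski_closed Z \<longleftrightarrow> (\<exists>F. Z = zero_set F)"

definition zariski_closure :: "('n::finite \<Rightarrow> complex) set \<Rightarrow> ('n \<Rightarrow> complex) set" where
  "zariski_closure X = \<Inter>{Z. zariski_closed Z \<and> X \<subseteq> Z}"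

definition irreducible_closed :: "('n::finite \<Rightarrow> complex) set \<Rightarrow> bool" where
  "irreducible_closed Z \<longleftrightarrow> zariski_closed Z \<and> Z \<noteq> {} \<and>
     (\<forall>Z1 Z2. zariski_closed Z1 \<and> zariski_closed Z2 \<and> Z \<subseteq> Z1 \<union> Z2 \<longrightarrow> Z \<subseteq> Z1 \<or> Z \<subseteq> Z2)"

text \<open>Krull dimension of a closed set X is at most d: every strictly increasing chain
  Z_0 \<subset> ... \<subset> Z_k of irreducible closed subsets of X has k \<le> d.\<close>
definition dim_le :: "('n::finite \<Rightarrow> complex) set \<Rightarrow> nat \<Rightarrow> bool" where
  "dim_le X d \<longleftrightarrow> (\<forall>Zs. Zs \<noteq> [] \<and> (\<forall>Z\<in>set Zs. irreducible_closed Z \<and> Z \<subseteq> X) \<and>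
       (\<forall>t. Suc t < length Zs \<longrightarrow> Zs ! t \<subset> Zs ! Suc t) \<longrightarrow> length Zs \<le> Suc d)"

text \<open>Affine cone over sing(omega) in C^(n+1) (including the vertex).\<close>
definition sing_cone :: "('n::finite \<Rightarrow> 'n mpoly) \<Rightarrow> ('n \<Rightarrow> complex) set" where
  "sing_cone A = zero_set (range A)"

text \<open>omega \<in> F^1(P^n, e), with n + 1 = CARD('n).  sing(omega) \<subseteq> P^n has codimension \<ge> 2
  iff its affine cone in C^(n+1) has codimension \<ge> 2, i.e. dimension \<le> CARD('n) - 2.\<close>
definition foliation :: "nat \<Rightarrow> ('n::finite \<Rightarrow> 'n mpoly) \<Rightarrow> bool" where
  "foliation e A \<longleftrightarrow>
     (\<forall>i. homogeneous (e - 1) (A i)) \<and> (\<exists>i. A i \<noteq> 0) \<and>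
     (\<Sum>i\<in>UNIV. mvar i * A i) = 0 \<and>
     (\<forall>i j k. wedge_dform A i j k = 0) \<and>
     dim_le (sing_cone A) (card (UNIV :: 'n set) - 2)"

definition J_ideal :: "('n::finite \<Rightarrow> 'n mpoly) \<Rightarrow> 'n mpoly set" where
  "J_ideal A = gen_ideal (range A)"

definition K_ideal :: "('n::finite \<Rightarrow> 'n mpoly) \<Rightarrow> 'n mpoly set" where
  "K_ideal A = ideal_quot (J_ideal A) (gen_ideal {dform A j k | j k. True})"

text \<open>Kupka set: closure (Zariski, in P^n) of the points of sing(omega) where d omega \<noteq> 0;
  represented by its (punctured) affine cone in C^(n+1) - {0}.\<close>
definition kupka_cone :: "('n::finite \<Rightarrow> 'n mpoly) \<Rightarrow> ('n \<Rightarrow> complex) set" where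
  "kupka_cone A = zariski_closure
      {x. x \<noteq> (\<lambda>_. 0) \<and> x \<in> sing_cone A \<and> (\<exists>j k. meval (dform A j k) x \<noteq> 0)} - {\<lambda>_. 0}"

text \<open>Homogeneous vanishing ideal of a projective set, given by its punctured cone.\<close>
definition vanishing_ideal :: "('n::finite \<Rightarrow> complex) set \<Rightarrow> 'n mpoly set" where
  "vanishing_ideal X = {f. \<forall>x\<in>X. meval f x = 0}"

end

theory Submission
  imports Defs "HOL-Computational_Algebra.Fundamental_Theorem_Algebra" "HOL-Analysis.Continuum_Not_Denumerable"
begin


definition mon :: "('n::finite \<Rightarrow>\<^sub>0 nat) \<Rightarrow> ('n \<Rightarrow> complex) \<Rightarrow> complex" where
  "mon m x = (\<Prod>i\<in>UNIV. x i ^ Poly_Mapping.lookup m i)"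

lemma mon_add: "mon (a + b) x = mon a x * mon b x"
  by (simp add: mon_def lookup_add power_add prod.distrib)

lemma mon_zero[simp]: "mon 0 x = 1"
  by (simp add: mon_def)

lemma meval_mon: "meval p x = (\<Sum>m\<in>Poly_Mapping.keys p. Poly_Mapping.lookup p m * mon m x)"
  by (simp add: meval_def mon_def)

lemma meval_superset:
  assumes "finite S" "Poly_Mapping.keys p \<subseteq> S"
  shows "meval p x = (\<Sum>m\<in>S. Poly_Mapping.lookup p m * mon m x)"
  unfolding meval_mon
  by (rule sum.mono_neutral_left) (use assms in \<open>auto simp: in_keys_iff\<close>)

lemma meval_zero[simp]: "meval 0 x = 0"
  by (simp add: meval_def)

lemma meval_add[simp]: "meval (p + q) x = meval p x + meval q x"
proof -
  let ?S = "Poly_Mapping.keys p \<union> Poly_Mapping.keys q"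
  have "meval (p+q) x = (\<Sum>m\<in>?S. Poly_Mapping.lookup (p+q) m * mon m x)"
    by (rule meval_superset) (use keys_add[of p q] in auto)
  also have "\<dots> = (\<Sum>m\<in>?S. Poly_Mapping.lookup p m * mon m x) + (\<Sum>m\<in>?S. Poly_Mapping.lookup q m * mon m x)"
    by (simp add: lookup_add distrib_right sum.distrib)
  also have "\<dots> = meval p x + meval q x"
    by (simp add: meval_superset[symmetric])
  finally show ?thesis .
qed

lemma meval_uminus[simp]: "meval (- p) x = - meval p x"
  by (simp add: meval_mon sum_negf)

lemma meval_diff[simp]: "meval (p - q) x = meval p x - meval q x"
  by (metis diff_conv_add_uminus meval_add meval_uminus)

lemma meval_single[simp]: "meval (Poly_Mapping.single m c) x = c * mon m x"
  by (simp add: meval_mon)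

lemma meval_sum: "meval (\<Sum>a\<in>A. f a) x = (\<Sum>a\<in>A. meval (f a) x)"
  by (induction A rule: infinite_finite_induct) auto

lemma mpoly_expand: "p = (\<Sum>m\<in>Poly_Mapping.keys p. Poly_Mapping.single m (Poly_Mapping.lookup p m))"
  by (rule poly_mapping_eqI) (simp add: lookup_sum lookup_single when_def in_keys_iff)

lemma meval_mult[simp]: "meval (p * q) x = meval p x * meval q x"
proof -
  have "p * q = (\<Sum>a\<in>Poly_Mapping.keys p. \<Sum>b\<in>Poly_Mapping.keys q.
          Poly_Mapping.single a (Poly_Mapping.lookup p a) * Poly_Mapping.single b (Poly_Mapping.lookup q b))"
    by (subst mpoly_expand[of p], subst mpoly_expand[of q]) (simp add: sum_distrib_left sum_distrib_right sum.swap[of _ "Poly_Mapping.keys q"])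
  then have "meval (p*q) x = (\<Sum>a\<in>Poly_Mapping.keys p. \<Sum>b\<in>Poly_Mapping.keys q.
          Poly_Mapping.lookup p a * mon a x * (Poly_Mapping.lookup q b * mon b x))"
    by (simp add: meval_sum mult_single mon_add mult_ac)
  also have "\<dots> = meval p x * meval q x"
    by (simp add: meval_mon sum_product)
  finally show ?thesis .
qed

lemma meval_one[simp]: "meval 1 x = 1"
  by (metis meval_single mon_zero mult_1 single_one)

lemma meval_power[simp]: "meval (p ^ k) x = meval p x ^ k"
  by (induction k) auto

lemma meval_mvar[simp]: "meval (mvar i) x = x i"
proof -
  have "(\<Prod>ia\<in>UNIV. x ia ^ (if i = ia then Suc 0 else 0)) = (\<Prod>ia\<in>{i}. x ia ^ (if i = ia then Suc 0 else 0))"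
    by (rule prod.mono_neutral_right) auto
  then show ?thesis by (simp add: mvar_def mon_def lookup_single when_def)
qed

definition C :: "complex \<Rightarrow> 'n mpoly" where "C c = Poly_Mapping.single 0 c"

lemma meval_C[simp]: "meval (C c) x = c" by (simp add: C_def)
lemma C_mult: "C (a*b) = C a * C b" by (simp add: C_def mult_single)
lemma C_add: "C (a+b) = C a + C b" by (simp add: C_def single_add)
lemma C_diff: "C (a-b) = C a - C b" by (simp add: C_def single_diff)
lemma C_1[simp]: "C 1 = 1" by (simp add: C_def)
lemma C_0[simp]: "C 0 = 0" by (simp add: C_def)


lemma ideal_mult: "is_ideal I \<Longrightarrow> f \<in> I \<Longrightarrow> h * f \<in> I"
  by (simp add: is_ideal_def)
lemma ideal_mult2: "is_ideal I \<Longrightarrow> f \<in> I \<Longrightarrow> f * h \<in> I"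
  by (simp add: is_ideal_def mult.commute)
lemma ideal_add: "is_ideal I \<Longrightarrow> f \<in> I \<Longrightarrow> g \<in> I \<Longrightarrow> f + g \<in> I"
  by (simp add: is_ideal_def)
lemma ideal_zero: "is_ideal I \<Longrightarrow> 0 \<in> I"
  by (simp add: is_ideal_def)
lemma ideal_uminus: "is_ideal I \<Longrightarrow> f \<in> I \<Longrightarrow> - f \<in> I"
  using ideal_mult[of I f "-1"] by simp
lemma ideal_diff: "is_ideal I \<Longrightarrow> f \<in> I \<Longrightarrow> g \<in> I \<Longrightarrow> f - g \<in> I"
  using ideal_add[of I f "-g"] ideal_uminus[of I g] by (metis diff_conv_add_uminus)
lemma ideal_sum: "is_ideal I \<Longrightarrow> (\<And>a. a \<in> A \<Longrightarrow> f a \<in> I) \<Longrightarrow> (\<Sum>a\<in>A. f a) \<in> I"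
  by (induction A rule: infinite_finite_induct) (auto simp: ideal_zero ideal_add)
lemma ideal_one: "is_ideal I \<Longrightarrow> 1 \<in> I \<Longrightarrow> f \<in> I"
  using ideal_mult[of I 1 f] by simp

lemma is_ideal_gen: "is_ideal (gen_ideal G)"
  unfolding gen_ideal_def is_ideal_def by auto
lemma gen_subset: "G \<subseteq> gen_ideal G"
  unfolding gen_ideal_def by auto
lemma gen_min: "is_ideal I \<Longrightarrow> G \<subseteq> I \<Longrightarrow> gen_ideal G \<subseteq> I"
  unfolding gen_ideal_def by auto

lemma is_ideal_vanish: "is_ideal {p. \<forall>x\<in>Z. meval p x = 0}"
  unfolding is_ideal_def by auto

lemma gen_vanish: "g \<in> gen_ideal G \<Longrightarrow> x \<in> zero_set G \<Longrightarrow> meval g x = 0"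
  using gen_min[OF is_ideal_vanish[of "{x}"], of G] by (auto simp: zero_set_def)

lemma ideal_C: "is_ideal I \<Longrightarrow> C c \<in> I \<Longrightarrow> c \<noteq> 0 \<Longrightarrow> 1 \<in> I"
  using ideal_mult[of I "C c" "C (1/c)"] by (simp flip: C_mult)

lemma ne_imp: "x \<in> A \<Longrightarrow> A \<noteq> {}" by auto

section \<open>Maximal ideals avoiding powers\<close>

lemma zorn_ideal:
  assumes I: "is_ideal I" and h: "\<forall>k. h ^ k \<notin> I"
  shows "\<exists>P. is_ideal P \<and> I \<subseteq> P \<and> (\<forall>k. h ^ k \<notin> P) \<and>
     (\<forall>Q. is_ideal Q \<and> P \<subseteq> Q \<and> (\<forall>k. h ^ k \<notin> Q) \<longrightarrow> Q = P)"
proof -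
  let ?A = "{P. is_ideal P \<and> I \<subseteq> P \<and> (\<forall>k. h ^ k \<notin> P)}"
  have "\<exists>M\<in>?A. \<forall>X\<in>?A. M \<subseteq> X \<longrightarrow> X = M"
  proof (rule subset_Zorn_nonempty)
    have "I \<in> ?A" using I h by simp
    then show "?A \<noteq> {}" by (rule ne_imp)
  next
    fix CC assume ne: "CC \<noteq> {}" and ch: "subset.chain ?A CC"
    have sub: "CC \<subseteq> ?A" and tot: "\<And>X Y. X \<in> CC \<Longrightarrow> Y \<in> CC \<Longrightarrow> X \<subseteq> Y \<or> Y \<subseteq> X"
      using ch unfolding subset.chain_def by blast+
    have "is_ideal (\<Union>CC)"
      unfolding is_ideal_def
    proof (intro conjI ballI allI)
      obtain X where "X \<in> CC" using ne by auto
      moreover have "is_ideal X" using \<open>X \<in> CC\<close> sub by auto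
      ultimately show "0 \<in> \<Union>CC" using ideal_zero by blast
    next
      fix f g assume "f \<in> \<Union>CC" "g \<in> \<Union>CC"
      then obtain X Y where XY: "X \<in> CC" "Y \<in> CC" "f \<in> X" "g \<in> Y" by auto
      have iX: "is_ideal X" "is_ideal Y" using XY sub by auto
      show "f + g \<in> \<Union>CC"
      proof (cases "X \<subseteq> Y")
        case True
        then show ?thesis using ideal_add[OF iX(2), of f g] XY by auto
      next
        case False
        then have "Y \<subseteq> X" using tot[OF XY(1,2)] by auto
        then show ?thesis using ideal_add[OF iX(1), of f g] XY by auto
      qed
    next
      fix f h' assume "f \<in> \<Union>CC"
      then obtain X where "X \<in> CC" "f \<in> X" by auto
      moreover have "is_ideal X" using \<open>X \<in> CC\<close> sub by auto
      ultimately show "h' * f \<in> \<Union>CC" using ideal_mult by blast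
    qed
    moreover have "I \<subseteq> \<Union>CC" using ne sub by auto
    moreover have "\<forall>k. h ^ k \<notin> \<Union>CC" using sub by auto
    ultimately show "\<Union>CC \<in> ?A" by simp
  qed
  then obtain M where M: "M \<in> ?A" "\<And>X. X \<in> ?A \<Longrightarrow> M \<subseteq> X \<Longrightarrow> X = M" by auto
  show ?thesis by (rule exI[of _ M]) (use M in auto)
qed


locale maxP =
  fixes P :: "'n::finite mpoly set" and h :: "'n mpoly"
  assumes ideal: "is_ideal P"
    and nopow: "\<forall>k. h ^ k \<notin> P"
    and ext: "\<And>g. g \<notin> P \<Longrightarrow> \<exists>m p u. p \<in> P \<and> h ^ m = p + u * g"
begin

lemma one_notin: "1 \<notin> P"
  using nopow[rule_format, of 0] by simp

lemma C_notin: "c \<noteq> 0 \<Longrightarrow> C c \<notin> P"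
  using ideal_C[OF ideal] one_notin by blast

lemma sat: assumes "g * h ^ k \<in> P" shows "g \<in> P"
proof (rule ccontr)
  assume "g \<notin> P"
  then obtain m p u where p: "p \<in> P" "h ^ m = p + u * g" using ext by blast
  have "h ^ (m + k) = p * h ^ k + u * (g * h ^ k)"
    by (simp add: power_add p(2) algebra_simps)
  also have "\<dots> \<in> P" using p(1) assms ideal ideal_add ideal_mult ideal_mult2 by blast
  finally show False using nopow by blast
qed

lemma prime: assumes "g1 * g2 \<in> P" shows "g1 \<in> P \<or> g2 \<in> P"
proof (rule ccontr)
  assume "\<not> (g1 \<in> P \<or> g2 \<in> P)"
  then obtain m p u where p: "p \<in> P" "h ^ m = p + u * g1" "g2 \<notin> P" using ext by blast
  have "g2 * h ^ m = g2 * p + u * (g1 * g2)" by (simp add: p(2) algebra_simps)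
  also have "\<dots> \<in> P" using p(1) assms ideal ideal_add ideal_mult ideal_mult2 by blast
  finally show False using sat p(3) by blast
qed

end

lemma maxP_exists:
  assumes I: "is_ideal I" and h: "\<forall>k. h ^ k \<notin> I"
  shows "\<exists>P. I \<subseteq> P \<and> maxP P h"
proof -
  obtain P where P: "is_ideal P" "I \<subseteq> P" "\<forall>k. h ^ k \<notin> P"
    and mx0: "\<forall>Q. is_ideal Q \<and> P \<subseteq> Q \<and> (\<forall>k. h ^ k \<notin> Q) \<longrightarrow> Q = P"
    using zorn_ideal[OF I h] by (elim exE conjE)
  have mx: "\<And>Q. is_ideal Q \<Longrightarrow> P \<subseteq> Q \<Longrightarrow> (\<forall>k. h ^ k \<notin> Q) \<Longrightarrow> Q = P"
    using mx0 by blast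
  have "maxP P h"
  proof
    fix g assume g: "g \<notin> P"
    let ?Q = "{p + u * g | p u. p \<in> P}"
    have "is_ideal ?Q"
      unfolding is_ideal_def
    proof (intro conjI ballI allI)
      have "(0::'a mpoly) = 0 + 0 * g" by simp
      then show "0 \<in> ?Q" using ideal_zero[OF P(1)] by blast
    next
      fix f1 f2 assume "f1 \<in> ?Q" "f2 \<in> ?Q"
      then obtain p1 u1 p2 u2 where "f1 = p1 + u1 * g" "f2 = p2 + u2 * g" "p1 \<in> P" "p2 \<in> P" by auto
      then show "f1 + f2 \<in> ?Q"
      proof -
        have "f1 + f2 = (p1 + p2) + (u1 + u2) * g" using \<open>f1 = _\<close> \<open>f2 = _\<close> by (simp add: algebra_simps)
        moreover have "p1 + p2 \<in> P" using ideal_add[OF P(1)] \<open>p1 \<in> P\<close> \<open>p2 \<in> P\<close> by blast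
        ultimately show ?thesis by blast
      qed
    next
      fix f1 w assume "f1 \<in> ?Q"
      then obtain p1 u1 where "f1 = p1 + u1 * g" "p1 \<in> P" by auto
      then show "w * f1 \<in> ?Q"
      proof -
        have "w * f1 = (w * p1) + (w * u1) * g" using \<open>f1 = _\<close> by (simp add: algebra_simps)
        moreover have "w * p1 \<in> P" using ideal_mult[OF P(1)] \<open>p1 \<in> P\<close> by blast
        ultimately show ?thesis by blast
      qed
    qed
    moreover have "P \<subseteq> ?Q"
    proof
      fix p assume "p \<in> P"
      moreover have "p = p + 0 * g" by simp
      ultimately show "p \<in> ?Q" by blast
    qed
    moreover have "?Q \<noteq> P"
    proof
      assume "?Q = P"
      moreover have "g = 0 + 1 * g" by simp
      then have "g \<in> ?Q" using ideal_zero[OF P(1)] by blast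
      ultimately show False using g by simp
    qed
    ultimately have "\<not> (\<forall>k. h ^ k \<notin> ?Q)" using mx[of ?Q] by auto
    then have "\<exists>k. h ^ k \<in> ?Q" by simp
    then show "\<exists>m p u. p \<in> P \<and> h ^ m = p + u * g" by blast
  qed (use P in auto)
  then show ?thesis using P by blast
qed


section \<open>Taylor\<close>

lemma single_add_1: "Poly_Mapping.single (a + b) (1::complex) = Poly_Mapping.single a 1 * Poly_Mapping.single b 1"
  by (simp add: mult_single)

lemma mvar_pow: "(mvar i :: 'n mpoly) ^ k = Poly_Mapping.single (Poly_Mapping.single i k) 1"
proof (induction k)
  case 0 then show ?case by simp
next
  case (Suc k)
  have "Poly_Mapping.single i (Suc k) = Poly_Mapping.single i 1 + Poly_Mapping.single i k"
    by (simp add: single_add[symmetric])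
  then show ?case using Suc by (simp add: mvar_def mult_single)
qed

lemma single_sum_1: "Poly_Mapping.single (\<Sum>i\<in>S. f i) (1::complex) = (\<Prod>i\<in>S. Poly_Mapping.single (f i) 1)"
  by (induction S rule: infinite_finite_induct) (auto simp: single_add_1)

lemma monom_expand: "(m :: 'n::finite \<Rightarrow>\<^sub>0 nat) = (\<Sum>i\<in>UNIV. Poly_Mapping.single i (Poly_Mapping.lookup m i))"
  by (rule poly_mapping_eqI) (simp add: lookup_sum lookup_single when_def)

lemma single_prod_mvar: "Poly_Mapping.single (m :: 'n::finite \<Rightarrow>\<^sub>0 nat) (1::complex) = (\<Prod>i\<in>UNIV. mvar i ^ Poly_Mapping.lookup m i)"
  by (subst monom_expand) (simp add: single_sum_1 mvar_pow)

lemma single_C: "Poly_Mapping.single m c = C c * Poly_Mapping.single m 1"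
  by (simp add: C_def mult_single)

context
  fixes P :: "'n::finite mpoly set"
  assumes P: "is_ideal P"
begin

lemma cong_mult:
  assumes "g1 - C c1 \<in> P" "g2 - C c2 \<in> P"
  shows "g1 * g2 - C (c1 * c2) \<in> P"
proof -
  have "g1 * g2 - C (c1 * c2) = (g1 - C c1) * g2 + C c1 * (g2 - C c2)"
    by (simp add: C_mult algebra_simps)
  then show ?thesis using assms P ideal_add ideal_mult ideal_mult2 by metis
qed

lemma cong_pow: "g - C c \<in> P \<Longrightarrow> g ^ k - C (c ^ k) \<in> P"
  by (induction k) (auto simp: ideal_zero[OF P] cong_mult)

lemma cong_prod: "(\<And>i. i \<in> S \<Longrightarrow> g i - C (c i) \<in> P) \<Longrightarrow> (\<Prod>i\<in>S. g i) - C (\<Prod>i\<in>S. c i) \<in> P"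
  by (induction S rule: infinite_finite_induct) (auto simp: ideal_zero[OF P] cong_mult)

lemma cong_sum: "(\<And>i. i \<in> S \<Longrightarrow> g i - C (c i) \<in> P) \<Longrightarrow> (\<Sum>i\<in>S. g i) - C (\<Sum>i\<in>S. c i) \<in> P"
proof (induction S rule: infinite_finite_induct)
  case (insert x F)
  have "(\<Sum>i\<in>insert x F. g i) - C (\<Sum>i\<in>insert x F. c i) = (g x - C (c x)) + ((\<Sum>i\<in>F. g i) - C (\<Sum>i\<in>F. c i))"
    using insert by (simp add: C_add)
  moreover have "g x - C (c x) \<in> P" "(\<Sum>i\<in>F. g i) - C (\<Sum>i\<in>F. c i) \<in> P" using insert by auto
  ultimately show ?case using ideal_add[OF P] by metis
qed (auto simp: ideal_zero[OF P])

lemma taylor: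
  assumes a: "\<And>i. mvar i - C (a i) \<in> P"
  shows "p - C (meval p a) \<in> P"
proof -
  have mono: "Poly_Mapping.single m 1 - C (mon m a) \<in> P" for m
    unfolding single_prod_mvar mon_def by (rule cong_prod) (rule cong_pow[OF a])
  have "(\<Sum>m\<in>Poly_Mapping.keys p. Poly_Mapping.single m (Poly_Mapping.lookup p m))
      - C (\<Sum>m\<in>Poly_Mapping.keys p. Poly_Mapping.lookup p m * mon m a) \<in> P"
  proof (rule cong_sum)
    fix m
    have "Poly_Mapping.single m (Poly_Mapping.lookup p m) - C (Poly_Mapping.lookup p m * mon m a)
       = C (Poly_Mapping.lookup p m) * (Poly_Mapping.single m 1 - C (mon m a))"
      by (subst single_C) (simp add: C_mult algebra_simps)
    then show "Poly_Mapping.single m (Poly_Mapping.lookup p m) - C (Poly_Mapping.lookup p m * mon m a) \<in> P"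
      using ideal_mult[OF P mono] by simp
  qed
  then show ?thesis by (simp add: meval_mon flip: mpoly_expand)
qed

end

section \<open>Evaluation of univariate polynomials\<close>

definition E :: "complex poly \<Rightarrow> 'n mpoly \<Rightarrow> 'n mpoly" where
  "E q Y = poly (map_poly C q) Y"

lemma E_0[simp]: "E 0 Y = 0" by (simp add: E_def)
lemma E_pCons[simp]: "E (pCons a q) Y = C a + Y * E q Y"
  by (simp add: E_def map_poly_pCons)
lemma E_1[simp]: "E 1 Y = 1" unfolding one_pCons by simp
lemma E_add: "E (p + q) Y = E p Y + E q Y"
  by (induction p q rule: poly_induct2) (auto simp: C_add algebra_simps)
lemma E_smult: "E (smult a q) Y = C a * E q Y"
  by (induction q) (auto simp: C_mult algebra_simps)
lemma E_mult: "E (p * q) Y = E p Y * E q Y"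
  by (induction p) (auto simp: E_add E_smult algebra_simps)
lemma E_prod: "E (\<Prod>i\<in>S. f i) Y = (\<Prod>i\<in>S. E (f i) Y)"
  by (induction S rule: infinite_finite_induct) (auto simp: E_mult)
lemma E_sum: "E (\<Sum>i\<in>S. f i) Y = (\<Sum>i\<in>S. E (f i) Y)"
  by (induction S rule: infinite_finite_induct) (auto simp: E_add)
lemma E_lin: "E [:-b, 1:] Y = Y - C b"
  by (simp add: C_def single_uminus)

context maxP
begin

lemma root_lemma:
  assumes nr: "\<And>r. Y - C r \<notin> P"
  shows "q \<noteq> 0 \<Longrightarrow> E q Y \<in> P \<Longrightarrow> False"
proof (induction "degree q" arbitrary: q rule: less_induct)
  case less
  show False
  proof (cases "degree q = 0")
    case True
    have q0: "q = [:coeff q 0:]" using degree_0_id[OF True] by simp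
    have c0: "coeff q 0 \<noteq> 0"
    proof
      assume "coeff q 0 = 0"
      then have "q = 0" using q0 by simp
      then show False using less(2) by simp
    qed
    have "E q Y = C (coeff q 0)" by (subst q0) simp
    then show False using less(3) C_notin[OF c0] by simp
  next
    case False
    then have "\<not> constant (poly q)" using constant_degree[of q] by simp
    then obtain z where "poly q z = 0"
      using fundamental_theorem_of_algebra by blast
    then have "[:-z, 1:] dvd q" using poly_eq_0_iff_dvd by blast
    then obtain q' where q': "q = [:-z, 1:] * q'" by (elim dvdE)
    have "q' \<noteq> 0" using less(2) q' by auto
    have "degree q = degree [:-z, 1:] + degree q'" unfolding q' by (rule degree_mult_eq) (use \<open>q' \<noteq> 0\<close> in auto)
    then have dq: "degree q' < degree q" by simp
    have "E q Y = (Y - C z) * E q' Y" unfolding q' E_mult E_lin ..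
    then have "(Y - C z) * E q' Y \<in> P" using less(3) by simp
    then have "Y - C z \<in> P \<or> E q' Y \<in> P" by (rule prime)
    then have "E q' Y \<in> P" using nr[of z] by blast
    then show False using less(1)[OF dq \<open>q' \<noteq> 0\<close>] by blast
  qed
qed

end


interpretation mvs: vector_space "\<lambda>c (p::'n::finite mpoly). C c * p"
  by unfold_locales (simp_all add: algebra_simps C_add C_mult)

lemma lin_dep:
  fixes u :: "'b \<Rightarrow> 'n::finite mpoly"
  assumes F: "finite F" and t: "finite t" and ct: "card t > card F"
    and keys: "\<And>a. a \<in> t \<Longrightarrow> Poly_Mapping.keys (u a) \<subseteq> F"
  shows "\<exists>c. (\<Sum>a\<in>t. C (c a) * u a) = 0 \<and> (\<exists>a\<in>t. c a \<noteq> 0)"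
proof (cases "inj_on u t")
  case False
  then obtain a b where ab: "a \<in> t" "b \<in> t" "a \<noteq> b" "u a = u b"
    unfolding inj_on_def by blast
  define c where "c x = (if x = a then 1 else if x = b then -1 else (0::complex))" for x
  have "(\<Sum>x\<in>t. C (c x) * u x) = (\<Sum>x\<in>{a,b}. C (c x) * u x)"
    by (rule sum.mono_neutral_right) (use t ab in \<open>auto simp: c_def\<close>)
  also have "\<dots> = 0" using ab by (simp add: c_def C_def single_uminus)
  finally show ?thesis using ab by (intro exI[of _ c]) (auto simp: c_def)
next
  case True
  define B where "B = (\<lambda>m. Poly_Mapping.single m (1::complex)) ` F"
  have fB: "finite B" and cB: "card B \<le> card F" using F by (auto simp: B_def card_image_le)
  have sp: "u ` t \<subseteq> mvs.span B"
  proof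
    fix v assume "v \<in> u ` t"
    then obtain a where a: "a \<in> t" "v = u a" by auto
    have "v = (\<Sum>m\<in>Poly_Mapping.keys v. C (Poly_Mapping.lookup v m) * Poly_Mapping.single m 1)"
      by (subst mpoly_expand) (simp add: single_C[symmetric])
    also have "\<dots> \<in> mvs.span B"
      by (rule mvs.span_sum, rule mvs.span_scale, rule mvs.span_base) (use a keys in \<open>auto simp: B_def\<close>)
    finally show "v \<in> mvs.span B" .
  qed
  have "mvs.dependent (u ` t)"
  proof (rule ccontr)
    assume "\<not> mvs.dependent (u ` t)"
    from mvs.independent_span_bound[OF fB this sp] have "card (u ` t) \<le> card B" by simp
    moreover have "card (u ` t) = card t" using True by (simp add: card_image)
    ultimately show False using cB ct by simp
  qed
  then obtain s w where s: "finite s" "s \<subseteq> u ` t" "(\<Sum>v\<in>s. C (w v) * v) = 0" "\<exists>v\<in>s. w v \<noteq> 0"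
    unfolding mvs.dependent_explicit by blast
  define c where "c x = (if u x \<in> s then w (u x) else 0)" for x
  have "(\<Sum>x\<in>t. C (c x) * u x) = (\<Sum>x\<in>t \<inter> u -` s. C (c x) * u x)"
    by (rule sum.mono_neutral_right) (use t in \<open>auto simp: c_def\<close>)
  also have "\<dots> = (\<Sum>v\<in>u ` (t \<inter> u -` s). C (w v) * v)"
    by (subst sum.reindex) (use True in \<open>auto simp: c_def intro: inj_on_subset\<close>)
  also have "u ` (t \<inter> u -` s) = s" using s(2) by auto
  finally have "(\<Sum>x\<in>t. C (c x) * u x) = 0" using s(3) by simp
  moreover obtain v where "v \<in> s" "w v \<noteq> 0" using s(4) by blast
  moreover then obtain a where "a \<in> t" "u a = v" using s(2) by auto
  ultimately show ?thesis by (intro exI[of _ c]) (auto simp: c_def)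
qed


lemma countable_monos: "countable (UNIV :: ('n::finite \<Rightarrow>\<^sub>0 nat) set)"
proof (rule countable_image_inj_on)
  show "countable (Poly_Mapping.lookup ` (UNIV :: ('n \<Rightarrow>\<^sub>0 nat) set))"
    by (rule countable_subset[OF subset_UNIV]) (rule countableI_type)
  show "inj_on Poly_Mapping.lookup (UNIV :: ('n \<Rightarrow>\<^sub>0 nat) set)"
    by (auto simp: inj_on_def poly_mapping_eqI)
qed

context maxP
begin

lemma key: "\<exists>a. mvar i - C a \<in> P"
proof (rule ccontr)
  define X where "X = (mvar i :: 'n mpoly)"
  assume "\<not> (\<exists>a. mvar i - C a \<in> P)"
  then have nr: "\<And>a. X - C a \<notin> P" by (auto simp: X_def)
  have "\<forall>a. \<exists>m p u. p \<in> P \<and> h ^ m = p + u * (X - C a)" using ext nr by blast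
  then obtain K Pp U where KPU: "\<And>a. Pp a \<in> P" "\<And>a. h ^ (K a) = Pp a + U a * (X - C a)"
    by metis
  define f where "f a = (K a, Poly_Mapping.keys (U a))" for a
  have "range f \<subseteq> UNIV \<times> {S. finite S \<and> S \<subseteq> UNIV}" by (auto simp: f_def)
  moreover have "countable ((UNIV :: nat set) \<times> {S. finite S \<and> S \<subseteq> (UNIV :: ('n \<Rightarrow>\<^sub>0 nat) set)})"
    using countable_Collect_finite_subset[OF countable_monos] by (auto intro!: countable_SIGMA countableI_type)
  ultimately have cr: "countable (range f)" by (rule countable_subset)
  obtain v where infv: "infinite (f -` {v})"
  proof (rule ccontr)
    assume "\<not> thesis"
    then have fin: "\<And>v. finite (f -` {v})" using that by blast
    have "(UNIV :: complex set) = (\<Union>v\<in>range f. f -` {v})" by auto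
    also have "countable \<dots>" using cr fin by (intro countable_UN) (auto intro: countable_finite)
    finally show False using uncountable_UNIV_complex by blast
  qed
  define T where "T = f -` {v}"
  obtain a1 where "a1 \<in> T" using infv T_def by (metis finite.emptyI ex_in_conv)
  then have v: "v = f a1" by (simp add: T_def)
  define F where "F = snd v"
  have fF: "finite F" by (simp add: F_def v f_def)
  obtain t where t: "finite t" "card t = Suc (card F)" "t \<subseteq> T"
    using infinite_arbitrarily_large[OF infv[folded T_def]] by blast
  have Kt: "\<And>a. a \<in> t \<Longrightarrow> K a = fst v" and Ut: "\<And>a. a \<in> t \<Longrightarrow> Poly_Mapping.keys (U a) \<subseteq> F"
    using t(3) by (auto simp: T_def f_def F_def)
  obtain c where c: "(\<Sum>a\<in>t. C (c a) * U a) = 0" "\<exists>a\<in>t. c a \<noteq> 0"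
    using lin_dep[of F t U, OF fF t(1) _ Ut] t(2) by auto
  then obtain a0 where a0: "a0 \<in> t" "c a0 \<noteq> 0" by blast
  define Q where "Q = (\<Sum>a\<in>t. smult (c a) (\<Prod>b\<in>t - {a}. [:-b, 1:]))"
  have "poly Q a0 = (\<Sum>a\<in>t. c a * (\<Prod>b\<in>t - {a}. a0 - b))"
    by (simp add: Q_def poly_sum poly_prod)
  also have "\<dots> = (\<Sum>a\<in>{a0}. c a * (\<Prod>b\<in>t - {a}. a0 - b))"
  proof (rule sum.mono_neutral_right)
    show "\<forall>a\<in>t - {a0}. c a * (\<Prod>b\<in>t - {a}. a0 - b) = 0"
    proof
      fix a assume "a \<in> t - {a0}"
      then have "a0 \<in> t - {a}" using a0 by auto
      then have "(\<Prod>b\<in>t - {a}. a0 - b) = 0" using t(1) by (intro prod_zero) auto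
      then show "c a * (\<Prod>b\<in>t - {a}. a0 - b) = 0" by simp
    qed
  qed (use t a0 in auto)
  also have "\<dots> \<noteq> 0" using a0 t(1) by simp
  finally have Q0: "Q \<noteq> 0" by auto
  have EQ: "E Q X = (\<Sum>a\<in>t. C (c a) * (\<Prod>b\<in>t - {a}. X - C b))"
    by (simp only: Q_def E_sum E_smult E_prod E_lin)
  have "E Q X * h ^ (fst v) = (\<Sum>a\<in>t. C (c a) * h ^ (K a) * (\<Prod>b\<in>t - {a}. X - C b))"
    unfolding EQ sum_distrib_right by (rule sum.cong) (auto simp: Kt mult_ac)
  also have "\<dots> = (\<Sum>a\<in>t. C (c a) * Pp a * (\<Prod>b\<in>t - {a}. X - C b))
      + (\<Sum>a\<in>t. C (c a) * U a) * (\<Prod>b\<in>t. X - C b)"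
  proof -
    have "C (c a) * h ^ (K a) * (\<Prod>b\<in>t - {a}. X - C b) =
          C (c a) * Pp a * (\<Prod>b\<in>t - {a}. X - C b) + C (c a) * U a * (\<Prod>b\<in>t. X - C b)"
      if "a \<in> t" for a
    proof -
      have pr: "(\<Prod>b\<in>t. X - C b) = (X - C a) * (\<Prod>b\<in>t - {a}. X - C b)"
        using that t(1) by (simp add: prod.remove)
      show ?thesis unfolding pr KPU(2) by (simp add: algebra_simps)
    qed
    then show ?thesis by (simp add: sum.distrib sum_distrib_right)
  qed
  also have "\<dots> \<in> P"
    unfolding c(1) by (simp, intro ideal_sum[OF ideal] ideal_mult2[OF ideal] ideal_mult[OF ideal] KPU(1))
  finally have "E Q X \<in> P" by (rule sat)
  then show False using root_lemma[OF nr Q0] by blast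
qed

end

theorem nullstellensatz:
  fixes I :: "'n::finite mpoly set"
  assumes I: "is_ideal I" and vanish: "\<And>x. (\<forall>g\<in>I. meval g x = 0) \<Longrightarrow> meval h x = 0"
  shows "\<exists>k. h ^ k \<in> I"
proof (rule ccontr)
  assume "\<not> (\<exists>k. h ^ k \<in> I)"
  then obtain P where IP: "I \<subseteq> P" and mP: "maxP P h" using maxP_exists[OF I] by blast
  interpret maxP P h by (rule mP)
  obtain a where a: "\<And>i. mvar i - C (a i) \<in> P" using key by metis
  have tay: "\<And>p. p - C (meval p a) \<in> P" using taylor[OF ideal a] .
  have "\<forall>g\<in>I. meval g a = 0"
  proof
    fix g assume "g \<in> I"
    then have "g \<in> P" using IP by auto
    then have "g - (g - C (meval g a)) \<in> P" using ideal_diff[OF ideal _ tay] by blast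
    then have "C (meval g a) \<in> P" by simp
    then show "meval g a = 0" using C_notin by blast
  qed
  then have "meval h a = 0" by (rule vanish)
  then have "h ^ 1 \<in> P" using tay[of h] by simp
  then show False using nopow by blast
qed


lemma mon_scale: "mon m (\<lambda>i. t * x i) = t ^ mdeg m * mon m x"
  by (simp add: mon_def mdeg_def power_mult_distrib prod.distrib power_sum)

lemma homog_scale:
  assumes "homogeneous d p"
  shows "meval p (\<lambda>i. t * x i) = t ^ d * meval p x"
  using assms by (simp add: meval_mon homogeneous_def mon_scale sum_distrib_left mult_ac)

lemma homog_zero:
  assumes "homogeneous d p" "d \<ge> 1"
  shows "meval p (\<lambda>_. 0) = 0"
  using homog_scale[OF assms(1), of 0 "\<lambda>_. 0"] assms(2) by (cases d) auto

lemma homog_const: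
  assumes "homogeneous 0 p"
  shows "meval p x = meval p (\<lambda>_. 0)"
  using homog_scale[OF assms, of 0 x] by simp

lemma homog_diff:
  "homogeneous d p \<Longrightarrow> homogeneous d q \<Longrightarrow> homogeneous d (p - q)"
  unfolding homogeneous_def using keys_diff[of p q] by blast

lemma mdeg_minus:
  assumes "Poly_Mapping.lookup m j \<noteq> 0"
  shows "mdeg (m - Poly_Mapping.single j 1) = mdeg m - 1"
proof -
  have "mdeg m = (\<Sum>i\<in>UNIV. Poly_Mapping.lookup (m - Poly_Mapping.single j 1) i + (if i = j then 1 else 0))"
    unfolding mdeg_def
    by (rule sum.cong) (use assms in \<open>auto simp: lookup_minus lookup_single\<close>)
  also have "\<dots> = mdeg (m - Poly_Mapping.single j 1) + 1"
    by (simp add: sum.distrib mdeg_def)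
  finally show ?thesis by simp
qed

lemma homog_pderiv:
  assumes "homogeneous d p"
  shows "homogeneous (d - 1) (mpderiv j p)"
  unfolding homogeneous_def
proof
  fix m' assume "m' \<in> Poly_Mapping.keys (mpderiv j p)"
  then have "m' \<in> (\<Union>m\<in>Poly_Mapping.keys p. Poly_Mapping.keys (Poly_Mapping.single (m - Poly_Mapping.single j 1)
              (Poly_Mapping.lookup p m * of_nat (Poly_Mapping.lookup m j))))"
    unfolding mpderiv_def by (rule subsetD[OF keys_sum])
  then obtain m where m: "m \<in> Poly_Mapping.keys p"
    "m' \<in> Poly_Mapping.keys (Poly_Mapping.single (m - Poly_Mapping.single j 1)
              (Poly_Mapping.lookup p m * of_nat (Poly_Mapping.lookup m j)))"
    by blast
  then have nz: "Poly_Mapping.lookup m j \<noteq> 0" and m': "m' = m - Poly_Mapping.single j 1"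
    by (auto split: if_splits)
  have "mdeg m = d" using assms m(1) unfolding homogeneous_def by blast
  then show "mdeg m' = d - 1" unfolding m' mdeg_minus[OF nz] by simp
qed

lemma homog_dform:
  assumes "\<And>i. homogeneous d (A i)"
  shows "homogeneous (d - 1) (dform A j k)"
  unfolding dform_def by (intro homog_diff homog_pderiv assms)

lemma mdeg_one:
  assumes "mdeg (m :: 'n::finite \<Rightarrow>\<^sub>0 nat) = 1"
  shows "\<exists>l. m = Poly_Mapping.single l 1"
proof -
  have "\<exists>l. Poly_Mapping.lookup m l \<noteq> 0"
  proof (rule ccontr)
    assume "\<not> ?thesis" then have "mdeg m = 0" by (simp add: mdeg_def)
    then show False using assms by simp
  qed
  then obtain l where l: "Poly_Mapping.lookup m l \<noteq> 0" by blast
  have "mdeg m = Poly_Mapping.lookup m l + (\<Sum>i\<in>UNIV - {l}. Poly_Mapping.lookup m i)"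
    unfolding mdeg_def by (simp add: sum.remove)
  then have eq: "Poly_Mapping.lookup m l + (\<Sum>i\<in>UNIV - {l}. Poly_Mapping.lookup m i) = 1"
    using assms by simp
  have l1: "Poly_Mapping.lookup m l = 1" using eq l by linarith
  have rest: "(\<Sum>i\<in>UNIV - {l}. Poly_Mapping.lookup m i) = 0" using eq l by linarith
  have "\<forall>i\<in>UNIV - {l}. Poly_Mapping.lookup m i = 0"
    using rest sum_eq_0_iff[of "UNIV - {l}" "Poly_Mapping.lookup m"] by simp
  then have "\<And>i. i \<noteq> l \<Longrightarrow> Poly_Mapping.lookup m i = 0" by blast
  then have "m = Poly_Mapping.single l 1"
    by (intro poly_mapping_eqI) (auto simp: lookup_single when_def l1)
  then show ?thesis by blast
qed

lemma homog_linear: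
  assumes "homogeneous 1 (p :: 'n::finite mpoly)"
  shows "meval p x = (\<Sum>l\<in>UNIV. Poly_Mapping.lookup p (Poly_Mapping.single l 1) * x l)"
proof -
  let ?S = "(\<lambda>l. Poly_Mapping.single l (1::nat)) ` (UNIV :: 'n set)"
  have "Poly_Mapping.keys p \<subseteq> ?S"
    using assms mdeg_one unfolding homogeneous_def by blast
  then have "meval p x = (\<Sum>m\<in>?S. Poly_Mapping.lookup p m * mon m x)"
    by (intro meval_superset) auto
  also have "\<dots> = (\<Sum>l\<in>UNIV. Poly_Mapping.lookup p (Poly_Mapping.single l 1) * mon (Poly_Mapping.single l 1) x)"
  proof (subst sum.reindex)
    show "inj_on (\<lambda>l. Poly_Mapping.single l (1::nat)) UNIV"
    proof (rule inj_onI)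
      fix x y assume "Poly_Mapping.single x (1::nat) = Poly_Mapping.single y 1"
      then have "Poly_Mapping.lookup (Poly_Mapping.single x (1::nat)) y = 1" by simp
      then show "x = y" by (metis lookup_single_not_eq zero_neq_one)
    qed
  qed simp
  also have "\<dots> = (\<Sum>l\<in>UNIV. Poly_Mapping.lookup p (Poly_Mapping.single l 1) * x l)"
  proof -
    have "mon (Poly_Mapping.single l 1) x = x l" for l
      using meval_mvar[of l x] by (simp add: mvar_def)
    then show ?thesis by simp
  qed
  finally show ?thesis .
qed

lemma meval_cont: "continuous_on UNIV (\<lambda>t::complex. meval p (\<lambda>i. t * y i))"
  unfolding meval_def by (intro continuous_intros)


lemma lin3:
  fixes a1 a2 a3 b1 b2 b3 :: complex
  shows "\<exists>x1 x2 x3. (x1 \<noteq> 0 \<or> x2 \<noteq> 0 \<or> x3 \<noteq> 0) \<and> a1*x1+a2*x2+a3*x3 = 0 \<and> b1*x1+b2*x2+b3*x3 = 0"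
proof (cases "a2*b3 - a3*b2 \<noteq> 0 \<or> a3*b1 - a1*b3 \<noteq> 0 \<or> a1*b2 - a2*b1 \<noteq> 0")
  case True
  show ?thesis
    by (rule exI[of _ "a2*b3 - a3*b2"], rule exI[of _ "a3*b1 - a1*b3"], rule exI[of _ "a1*b2 - a2*b1"])
       (use True in \<open>simp add: algebra_simps\<close>)
next
  case False
  then have c1: "a2*b3 = a3*b2" and c2: "a3*b1 = a1*b3" and c3: "a1*b2 = a2*b1" by auto
  show ?thesis
  proof (cases "a1 \<noteq> 0")
    case True
    show ?thesis
      by (rule exI[of _ "-a2"], rule exI[of _ "a1"], rule exI[of _ 0]) (use True c3 in \<open>simp add: algebra_simps\<close>)
  next
    case a1: False
    show ?thesis
    proof (cases "a2 \<noteq> 0")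
      case True
      show ?thesis
        by (rule exI[of _ 0], rule exI[of _ "-a3"], rule exI[of _ a2]) (use True c1 in \<open>simp add: algebra_simps\<close>)
    next
      case a2: False
      show ?thesis
      proof (cases "a3 \<noteq> 0")
        case True
        then have "b1 = 0" using c2 a1 by simp
        then show ?thesis
          by (intro exI[of _ 1] exI[of _ 0]) (use a1 a2 in simp)
      next
        case a3: False
        show ?thesis
        proof (cases "b1 \<noteq> 0")
          case True
          show ?thesis
            by (rule exI[of _ "-b2"], rule exI[of _ b1], rule exI[of _ 0]) (use True a1 a2 a3 in \<open>simp add: algebra_simps\<close>)
        next
          case False
          then show ?thesis
            by (intro exI[of _ 1] exI[of _ 0]) (use a1 a2 a3 in simp)
        qed
      qed
    qed
  qed
qed

lemma three_distinct:
  assumes "card (UNIV :: 'n set) \<ge> 3"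
  obtains p q r :: "'n::finite" where "p \<noteq> q" "p \<noteq> r" "q \<noteq> r"
proof -
  obtain p :: 'n where True by blast
  have "\<exists>q. q \<noteq> p"
  proof (rule ccontr)
    assume "\<not> ?thesis" then have eq: "UNIV = {p}" by auto
    have "card {p} = 1" by simp
    then have "card (UNIV :: 'n set) = 1" by (metis eq)
    then show False using assms by linarith
  qed
  then obtain q where q: "q \<noteq> p" by blast
  have "\<exists>r. r \<notin> {p, q}"
  proof (rule ccontr)
    assume "\<not> ?thesis" then have "UNIV \<subseteq> {p, q}" by auto
    then have "card (UNIV :: 'n set) \<le> card {p, q}" by (intro card_mono) auto
    also have "\<dots> \<le> 2" by (simp add: card_insert_if)
    finally show False using assms by simp
  qed
  then obtain r where "r \<notin> {p, q}" by blast
  then show ?thesis using that q by auto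
qed

lemma two_linear_common_zero:
  assumes "card (UNIV :: 'n::finite set) \<ge> 3"
  shows "\<exists>y :: 'n \<Rightarrow> complex. y \<noteq> (\<lambda>_. 0) \<and> (\<Sum>l\<in>UNIV. \<alpha> l * y l) = 0 \<and> (\<Sum>l\<in>UNIV. \<beta> l * y l) = 0"
proof -
  obtain p q r :: 'n where pqr: "p \<noteq> q" "p \<noteq> r" "q \<noteq> r" using three_distinct[OF assms] by blast
  obtain x1 x2 x3 where x: "x1 \<noteq> 0 \<or> x2 \<noteq> 0 \<or> x3 \<noteq> 0"
    "\<alpha> p*x1+\<alpha> q*x2+\<alpha> r*x3 = 0" "\<beta> p*x1+\<beta> q*x2+\<beta> r*x3 = 0"
    using lin3 by blast
  define y where "y i = (if i = p then x1 else if i = q then x2 else if i = r then x3 else 0)" for i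
  have sum3: "(\<Sum>l\<in>UNIV. \<gamma> l * y l) = \<gamma> p*x1+\<gamma> q*x2+\<gamma> r*x3" for \<gamma>
  proof -
    have "(\<Sum>l\<in>UNIV. \<gamma> l * y l) = (\<Sum>l\<in>{p,q,r}. \<gamma> l * y l)"
      by (rule sum.mono_neutral_right) (auto simp: y_def)
    also have "\<dots> = \<gamma> p*x1+\<gamma> q*x2+\<gamma> r*x3" using pqr by (simp add: y_def)
    finally show ?thesis .
  qed
  have "y \<noteq> (\<lambda>_. 0)"
  proof
    assume "y = (\<lambda>_. 0)"
    then have "y p = 0" "y q = 0" "y r = 0" by auto
    then show False using x(1) pqr by (auto simp: y_def)
  qed
  then show ?thesis by (intro exI[of _ y]) (use x sum3 in simp)
qed


lemma vanish_at_0: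
  fixes g :: "complex \<Rightarrow> complex"
  assumes cont: "continuous_on UNIV g" and z: "\<And>t. t \<noteq> 0 \<Longrightarrow> g t = 0"
  shows "g 0 = 0"
proof -
  have "(g \<longlongrightarrow> g 0) (at 0)" using cont by (simp add: continuous_on_def)
  moreover have "(g \<longlongrightarrow> 0) (at 0)"
  proof (rule tendsto_eventually)
    show "eventually (\<lambda>t. g t = 0) (at 0)"
      unfolding eventually_at by (rule exI[of _ 1]) (auto simp: z)
  qed
  ultimately show ?thesis using tendsto_unique by (metis at_neq_bot)
qed

theorem lemma4p6:
  fixes A :: "'n::finite \<Rightarrow> 'n mpoly" and e :: nat
  assumes "card (UNIV :: 'n set) \<ge> 3"
    and "e \<ge> 2"
    and "foliation e A"
    and "radical (J_ideal A) = J_ideal A"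
  shows "K_ideal A = vanishing_ideal (kupka_cone A)"
proof -
  have homA: "\<And>i. homogeneous (e - 1) (A i)" and wedge: "\<And>i j k. wedge_dform A i j k = 0"
    using assms(3) unfolding foliation_def by auto
  define S where "S = {x. x \<noteq> (\<lambda>_. 0) \<and> x \<in> sing_cone A \<and> (\<exists>j k. meval (dform A j k) x \<noteq> 0)}"
  have kc: "kupka_cone A = zariski_closure S - {\<lambda>_. 0}" by (simp add: kupka_cone_def S_def)
  have S_cl: "S \<subseteq> zariski_closure S" unfolding zariski_closure_def by blast
  define L where "L = gen_ideal {dform A j k | j k. True}"
  have KL: "K_ideal A = {f. \<forall>g\<in>L. f * g \<in> J_ideal A}"
    by (simp add: K_ideal_def ideal_quot_def L_def)
  have JV: "\<And>g x. g \<in> J_ideal A \<Longrightarrow> x \<in> sing_cone A \<Longrightarrow> meval g x = 0"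
    using gen_vanish unfolding J_ideal_def sing_cone_def by blast
  have dL: "dform A j k \<in> L" for j k unfolding L_def by (rule subsetD[OF gen_subset]) blast
  show ?thesis
  proof (intro equalityI subsetI)
    fix f assume "f \<in> K_ideal A"
    then have fK: "\<And>g. g \<in> L \<Longrightarrow> f * g \<in> J_ideal A" using KL by blast
    have "S \<subseteq> zero_set {f}"
    proof
      fix y assume "y \<in> S"
      then obtain j k where y: "y \<in> sing_cone A" "meval (dform A j k) y \<noteq> 0" unfolding S_def by blast
      have "meval (f * dform A j k) y = 0" by (rule JV[OF fK[OF dL] y(1)])
      then show "y \<in> zero_set {f}" using y(2) by (simp add: zero_set_def)
    qed
    then have "zariski_closure S \<subseteq> zero_set {f}"
      unfolding zariski_closure_def zariski_closed_def by blast
    then show "f \<in> vanishing_ideal (kupka_cone A)"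
      unfolding kc vanishing_ideal_def zero_set_def by blast
  next
    fix f assume "f \<in> vanishing_ideal (kupka_cone A)"
    then have fS: "\<And>x. x \<in> S \<Longrightarrow> meval f x = 0"
      using S_cl unfolding kc vanishing_ideal_def S_def by blast
    have f0: "meval f x = 0" if x: "x \<in> sing_cone A" "meval (dform A j k) x \<noteq> 0" for x j k
    proof (cases "x = (\<lambda>_. 0)")
      case False
      then show ?thesis using x fS unfolding S_def by blast
    next
      case True
      define D where "D = meval (dform A j k) (\<lambda>_. 0)"
      have D: "D \<noteq> 0" using x True by (simp add: D_def)
      have hd: "homogeneous (e - 1 - 1) (dform A j' k')" for j' k' by (rule homog_dform[OF homA])
      have e2: "e - 1 - 1 = 0"
      proof (rule ccontr)
        assume "e - 1 - 1 \<noteq> 0"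
        then have "D = 0" unfolding D_def by (intro homog_zero[OF hd]) simp
        then show False using D by simp
      qed
      have hd0: "homogeneous 0 (dform A j' k')" for j' k' using hd e2 by simp
      have e1: "e - 1 = 1" using e2 assms(2) by linarith
      have hA1: "homogeneous 1 (A i)" for i using homA[of i] unfolding e1 .
      obtain y :: "'n \<Rightarrow> complex" where y: "y \<noteq> (\<lambda>_. 0)"
        "(\<Sum>l\<in>UNIV. Poly_Mapping.lookup (A j) (Poly_Mapping.single l 1) * y l) = 0"
        "(\<Sum>l\<in>UNIV. Poly_Mapping.lookup (A k) (Poly_Mapping.single l 1) * y l) = 0"
        using two_linear_common_zero[OF assms(1), where \<alpha> = "\<lambda>l. Poly_Mapping.lookup (A j) (Poly_Mapping.single l 1)"
            and \<beta> = "\<lambda>l. Poly_Mapping.lookup (A k) (Poly_Mapping.single l 1)"] by blast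
      have Ajy: "meval (A j) y = 0" and Aky: "meval (A k) y = 0"
        using y homog_linear[OF hA1] by simp_all
      have Dy: "meval (dform A j k) z = D" for z unfolding D_def by (rule homog_const[OF hd0])
      have Ay: "meval (A i) y = 0" for i
      proof -
        have "meval (wedge_dform A i j k) y = 0" using wedge by simp
        then have "meval (A i) y * D = 0" using Ajy Aky Dy by (simp add: wedge_dform_def)
        then show ?thesis using D by simp
      qed
      have "meval f (\<lambda>i. t * y i) = 0" if t: "t \<noteq> 0" for t
      proof (rule fS)
        have "(\<lambda>i. t * y i) \<noteq> (\<lambda>_. 0)"
        proof
          assume "(\<lambda>i. t * y i) = (\<lambda>_. 0)"
          then have "y = (\<lambda>_. 0)" using t by (metis mult_eq_0_iff)
          then show False using y(1) by simp
        qed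
        moreover have "(\<lambda>i. t * y i) \<in> sing_cone A"
          unfolding sing_cone_def zero_set_def using homog_scale[OF hA1] Ay by auto
        moreover have "meval (dform A j k) (\<lambda>i. t * y i) \<noteq> 0" using Dy D by simp
        ultimately show "(\<lambda>i. t * y i) \<in> S" unfolding S_def by blast
      qed
      then have "meval f (\<lambda>i. 0 * y i) = 0"
        using vanish_at_0[OF meval_cont, of f y] by blast
      then show ?thesis using True by simp
    qed
    show "f \<in> K_ideal A"
      unfolding KL
    proof (intro CollectI ballI)
      fix g assume g: "g \<in> L"
      have "\<exists>k. (f * g) ^ k \<in> J_ideal A"
      proof (rule nullstellensatz)
        show "is_ideal (J_ideal A)" unfolding J_ideal_def by (rule is_ideal_gen)
      next
        fix x assume xJ: "\<forall>q\<in>J_ideal A. meval q x = 0"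
        then have xs: "x \<in> sing_cone A"
          unfolding sing_cone_def zero_set_def J_ideal_def using gen_subset by blast
        show "meval (f * g) x = 0"
        proof (cases "meval g x = 0")
          case False
          have "\<exists>j k. meval (dform A j k) x \<noteq> 0"
          proof (rule ccontr)
            assume "\<not> ?thesis"
            then have "L \<subseteq> {p. \<forall>z\<in>{x}. meval p z = 0}"
              unfolding L_def by (intro gen_min is_ideal_vanish) auto
            then show False using g False by auto
          qed
          then obtain j k where "meval (dform A j k) x \<noteq> 0" by blast
          then show ?thesis using f0[OF xs] by simp
        qed simp
      qed
      then obtain k where k: "(f * g) ^ k \<in> J_ideal A" by blast
      show "f * g \<in> J_ideal A"
      proof (cases k)
        case 0
        then have "1 \<in> J_ideal A" using k by simp
        then show ?thesis unfolding J_ideal_def using ideal_one[OF is_ideal_gen] by blast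
      next
        case (Suc k')
        then have "f * g \<in> radical (J_ideal A)" using k unfolding radical_def by blast
        then show ?thesis using assms(4) by simp
      qed
    qed
  qed
qed


end
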